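(* Let $k$ be a field, $A,B$ abelian groups, $R$ an $A$-graded and $S$ a $B$-graded finite-dimensional Frobenius $k$-algebra with forms $\langle-,-\rangle_R,\langle-,-\rangle_S$ and Nakayama automorphisms $\nu_R,\nu_S$, and $t:A\otimes B\to k^\times$ a bicharacter. Suppose there exist $\sigma_R\in A$, $\sigma_S\in B$ such that for homogeneous $r,r'\in R$, $\langle r,r'\rangle_R\neq0$ implies $|r|+|r'|+\sigma_R=0$, and for homogeneous $s,s'\in S$, $\langle s,s'\rangle_S\ne0$ implies $|s|+|s'|+\sigma_S=0$. Let $\nu$ be the Nakayama automorphism of $R\otimes^tS$ with respect to the form $\langle r\otimes s,r'\otimes s'\rangle=t(|r'|,|s|)\langle r,r'\rangle_R\langle s,s'\rangle_S$. Then for homogeneous $a\in R$, $b\in S$, $$\nu(a\otimes b)=t(|a|,\sigma_S)\,t(\sigma_R,|b|)^{-1}\,\nu_R(a)\otimes\nu_S(b).$$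
   Context: $R\otimes^tS$ is $R\otimes S$ with product $(r\otimes s)(r'\otimes s')=t(|r'|,|s|)rr'\otimes ss'$; $|\cdot|$ denotes degree. The Nakayama automorphism $\nu$ of a Frobenius algebra with form $\langle-,-\rangle$ is defined by $\langle x,y\rangle=\langle y,\nu(x)\rangle$ for all $y$. *)

theory Defs
  imports Main "HOL.Vector_Spaces"
begin

definition k_algebra :: "('k::field \<Rightarrow> 'r::ring_1 \<Rightarrow> 'r) \<Rightarrow> bool" where
  "k_algebra sc \<longleftrightarrow> vector_space sc \<and>
     (\<forall>c x y. sc c (x * y) = sc c x * y \<and> sc c (x * y) = x * sc c y)"

definition fin_dim :: "('k::field \<Rightarrow> 'r::ab_group_add \<Rightarrow> 'r) \<Rightarrow> bool" where
  "fin_dim sc \<longleftrightarrow> (\<exists>B. finite_dimensional_vector_space sc B)"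

definition bilinear_map ::
  "('k::field \<Rightarrow> 'u::ab_group_add \<Rightarrow> 'u) \<Rightarrow> ('k \<Rightarrow> 'v::ab_group_add \<Rightarrow> 'v)
   \<Rightarrow> ('k \<Rightarrow> 'w::ab_group_add \<Rightarrow> 'w) \<Rightarrow> ('u \<Rightarrow> 'v \<Rightarrow> 'w) \<Rightarrow> bool" where
  "bilinear_map s1 s2 s3 f \<longleftrightarrow>
     (\<forall>x. Vector_Spaces.linear s2 s3 (f x)) \<and> (\<forall>y. Vector_Spaces.linear s1 s3 (\<lambda>x. f x y))"

definition frobenius_form :: "('k::field \<Rightarrow> 'r::ring_1 \<Rightarrow> 'r) \<Rightarrow> ('r \<Rightarrow> 'r \<Rightarrow> 'k) \<Rightarrow> bool" where
  "frobenius_form sc form \<longleftrightarrow>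
     bilinear_map sc sc (*) form \<and>
     (\<forall>x y z. form (x * y) z = form x (y * z)) \<and>
     (\<forall>x. (\<forall>y. form x y = 0) \<longrightarrow> x = 0) \<and>
     (\<forall>y. (\<forall>x. form x y = 0) \<longrightarrow> y = 0)"

definition frobenius_algebra :: "('k::field \<Rightarrow> 'r::ring_1 \<Rightarrow> 'r) \<Rightarrow> ('r \<Rightarrow> 'r \<Rightarrow> 'k) \<Rightarrow> bool" where
  "frobenius_algebra sc form \<longleftrightarrow> k_algebra sc \<and> fin_dim sc \<and> frobenius_form sc form"

definition nakayama :: "('r \<Rightarrow> 'r \<Rightarrow> 'k) \<Rightarrow> 'r \<Rightarrow> 'r" where
  "nakayama form x = (THE z. \<forall>y. form x y = form y z)"

text \<open>An A-grading of an algebra: a family of subspaces, multiplicative, with 1 in degree 0,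
  whose (internal) direct sum is the whole algebra.  "x \<in> G a" means x is homogeneous of degree a.\<close>
definition graded :: "('k::field \<Rightarrow> 'r::ring_1 \<Rightarrow> 'r) \<Rightarrow> ('a::ab_group_add \<Rightarrow> 'r set) \<Rightarrow> bool" where
  "graded sc G \<longleftrightarrow>
     (\<forall>a. module.subspace sc (G a)) \<and>
     (\<forall>a b x y. x \<in> G a \<longrightarrow> y \<in> G b \<longrightarrow> x * y \<in> G (a + b)) \<and>
     1 \<in> G 0 \<and>
     (\<forall>x. \<exists>!f. finite {a. f a \<noteq> 0} \<and> (\<forall>a. f a \<in> G a) \<and> x = sum f {a. f a \<noteq> 0})"

definition bicharacter :: "('a::ab_group_add \<Rightarrow> 'b::ab_group_add \<Rightarrow> 'k::field) \<Rightarrow> bool" where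
  "bicharacter t \<longleftrightarrow> (\<forall>a b. t a b \<noteq> 0) \<and>
     (\<forall>a a' b. t (a + a') b = t a b * t a' b) \<and>
     (\<forall>a b b'. t a (b + b') = t a b * t a b')"

definition is_tensor_product ::
  "('k::field \<Rightarrow> 'r::ab_group_add \<Rightarrow> 'r) \<Rightarrow> ('k \<Rightarrow> 's::ab_group_add \<Rightarrow> 's)
   \<Rightarrow> ('k \<Rightarrow> 't::ab_group_add \<Rightarrow> 't) \<Rightarrow> ('r \<Rightarrow> 's \<Rightarrow> 't) \<Rightarrow> bool" where
  "is_tensor_product scR scS scT tp \<longleftrightarrow>
     vector_space scT \<and> bilinear_map scR scS scT tp \<and>
     (\<exists>BR BS. \<not> module.dependent scR BR \<and> module.span scR BR = UNIV \<and>
              \<not> module.dependent scS BS \<and> module.span scS BS = UNIV \<and>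
              inj_on (\<lambda>(r, s). tp r s) (BR \<times> BS) \<and>
              \<not> module.dependent scT ((\<lambda>(r, s). tp r s) ` (BR \<times> BS)) \<and>
              module.span scT ((\<lambda>(r, s). tp r s) ` (BR \<times> BS)) = UNIV)"

definition is_twisted_tensor ::
  "('k::field \<Rightarrow> 'r::ring_1 \<Rightarrow> 'r) \<Rightarrow> ('a::ab_group_add \<Rightarrow> 'r set)
   \<Rightarrow> ('k \<Rightarrow> 's::ring_1 \<Rightarrow> 's) \<Rightarrow> ('b::ab_group_add \<Rightarrow> 's set)
   \<Rightarrow> ('a \<Rightarrow> 'b \<Rightarrow> 'k) \<Rightarrow> ('k \<Rightarrow> 't::ring_1 \<Rightarrow> 't) \<Rightarrow> ('r \<Rightarrow> 's \<Rightarrow> 't) \<Rightarrow> bool" where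
  "is_twisted_tensor scR GR scS GS t scT tp \<longleftrightarrow>
     k_algebra scT \<and> is_tensor_product scR scS scT tp \<and>
     (\<forall>a b r s r' s'. r' \<in> GR a \<longrightarrow> s \<in> GS b \<longrightarrow>
        tp r s * tp r' s' = scT (t a b) (tp (r * r') (s * s')))"

end

theory Submission imports Defs begin

lemma lin_mh: "Vector_Spaces.linear s1 s2 f \<Longrightarrow> module_hom s1 s2 f"
  by (simp add: module_hom_iff_linear)

lemma frob_facts:
  fixes sc :: "'k::field \<Rightarrow> 'r::ring_1 \<Rightarrow> 'r"
  assumes "frobenius_algebra sc form"
  shows "vector_space sc" "\<And>x. module_hom sc (*) (form x)" "\<And>y. module_hom sc (*) (\<lambda>x. form x y)"
    "\<And>y. (\<And>x. form x y = 0) \<Longrightarrow> y = 0" "\<exists>B. finite_dimensional_vector_space sc B"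
  using assms unfolding frobenius_algebra_def k_algebra_def fin_dim_def frobenius_form_def bilinear_map_def
  by (auto intro: lin_mh)

lemma nak_ex:
  fixes sc :: "'k::field \<Rightarrow> 'r::ring_1 \<Rightarrow> 'r"
  assumes F: "frobenius_algebra sc form"
  shows "\<exists>z. \<forall>y. form a y = form y z"
proof -
  obtain B where fd: "finite_dimensional_vector_space sc B" using frob_facts(5)[OF F] by blast
  interpret V: finite_dimensional_vector_space sc B by fact
  note l2 = frob_facts(2)[OF F] and l1 = frob_facts(3)[OF F] and nd = frob_facts(4)[OF F]
  define Psi where "Psi z = (\<Sum>i\<in>B. sc (form i z) i)" for z
  have mh: "module_hom sc sc Psi"
    unfolding module_hom_def module_hom_axioms_def
  proof (intro conjI allI)
    show "module sc" by (rule V.module_axioms)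
    show "module sc" by (rule V.module_axioms)
    fix x y show "Psi (x + y) = Psi x + Psi y"
      unfolding Psi_def by (simp add: module_hom.add[OF l2] V.scale_left_distrib sum.distrib)
  next
    fix c x show "Psi (sc c x) = sc c (Psi x)"
      unfolding Psi_def by (simp add: module_hom.scale[OF l2] V.scale_sum_right)
  qed
  have lin: "Vector_Spaces.linear sc sc Psi" using mh by (simp add: module_hom_iff_linear)
  have ind: "\<And>u. (\<Sum>i\<in>B. sc (u i) i) = 0 \<Longrightarrow> \<forall>i\<in>B. u i = 0"
    using V.dependent_finite[OF V.finite_Basis] V.independent_Basis by blast
  have ext: "\<And>h. h 0 \<Longrightarrow> (\<And>c x y. x \<in> B \<Longrightarrow> h y \<Longrightarrow> h (sc c x + y)) \<Longrightarrow> h w" for w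
    using V.span_induct_alt[of w B] V.span_Basis by blast
  have inj: "inj Psi"
    unfolding module_hom.inj_iff_eq_0[OF mh]
  proof (intro allI impI)
    fix z assume "Psi z = 0"
    then have c: "\<forall>i\<in>B. form i z = 0" using ind[of "\<lambda>i. form i z"] unfolding Psi_def by simp
    have "form y z = 0" for y
      by (rule ext[of "\<lambda>y. form y z = 0"]) (auto simp: module_hom.add[OF l1] module_hom.scale[OF l1] c module_hom.zero[OF l1])
    then show "z = 0" by (rule nd)
  qed
  have "surj Psi" by (rule V.linear_inj_imp_surj[OF lin inj])
  then obtain z where z: "Psi z = (\<Sum>i\<in>B. sc (form a i) i)" by (metis surjD)
  have "(\<Sum>i\<in>B. sc (form i z - form a i) i) = 0"
    using z unfolding Psi_def by (simp add: V.scale_left_diff_distrib sum_subtractf)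
  then have c: "\<forall>i\<in>B. form a i = form i z" using ind[of "\<lambda>i. form i z - form a i"] by auto
  have "form a y = form y z" for y
    by (rule ext[of "\<lambda>y. form a y = form y z"])
       (auto simp: module_hom.add[OF l1] module_hom.scale[OF l1] module_hom.add[OF l2] module_hom.scale[OF l2] c
             module_hom.zero[OF l1] module_hom.zero[OF l2])
  then show ?thesis by blast
qed

lemma nak_prop:
  fixes sc :: "'k::field \<Rightarrow> 'r::ring_1 \<Rightarrow> 'r"
  assumes F: "frobenius_algebra sc form"
  shows "form a y = form y (nakayama form a)"
proof -
  note l2 = frob_facts(2)[OF F] and nd = frob_facts(4)[OF F]
  have "\<exists>!z. \<forall>y. form a y = form y z"
  proof -
    obtain z where z: "\<forall>y. form a y = form y z" using nak_ex[OF F] by blast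
    moreover have "z' = z" if "\<forall>y. form a y = form y z'" for z'
    proof -
      have "form y (z' - z) = 0" for y using that z by (simp add: module_hom.diff[OF l2])
      then have "z' - z = 0" by (rule nd)
      then show ?thesis by simp
    qed
    ultimately show ?thesis by blast
  qed
  from theI'[OF this] show ?thesis unfolding nakayama_def by blast
qed


lemma graded_dec:
  assumes "graded sc G" shows "\<exists>g D. finite D \<and> (\<forall>d. g d \<in> G d) \<and> x = sum g D"
  using assms unfolding graded_def by metis

lemma graded_vanish:
  assumes "graded sc G" "module_hom sc (*) f" "\<And>d r. r \<in> G d \<Longrightarrow> f r = 0"
  shows "f x = 0"
proof -
  obtain g D where "finite D" "\<forall>d. g d \<in> G d" "x = sum g D" using graded_dec[OF assms(1)] by blast
  then show ?thesis using assms(3) by (simp add: module_hom.sum[OF assms(2)]) (metis (no_types, lifting) sum.neutral)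
qed

lemma bichar_facts:
  fixes t :: "'a::ab_group_add \<Rightarrow> 'b::ab_group_add \<Rightarrow> 'k::field"
  assumes "bicharacter t"
  shows "t (- x) y = inverse (t x y)" "t x (- y) = inverse (t x y)"
    "t (x + x') y = t x y * t x' y" "t x (y + y') = t x y * t x y'" "t x y \<noteq> 0"
proof -
  have nz: "\<And>x y. t x y \<noteq> 0" and m1: "\<And>x x' y. t (x + x') y = t x y * t x' y"
    and m2: "\<And>x y y'. t x (y + y') = t x y * t x y'" using assms unfolding bicharacter_def by auto
  have "t (- x) y * t x y = 1"
  proof -
    have "t 0 y = t 0 y * t 0 y" using m1[of 0 0 y] by simp
    then have "t 0 y = 1" using nz[of 0 y] by (metis mult_cancel_left1)
    then show ?thesis using m1[of "-x" x y] by simp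
  qed
  then show "t (- x) y = inverse (t x y)" using nz by (simp add: field_simps)
  have "t x (- y) * t x y = 1"
  proof -
    have "t x 0 = t x 0 * t x 0" using m2[of x 0 0] by simp
    then have "t x 0 = 1" using nz[of x 0] by (metis mult_cancel_left1)
    then show ?thesis using m2[of x "-y" y] by simp
  qed
  then show "t x (- y) = inverse (t x y)" using nz by (simp add: field_simps)
qed (use assms in \<open>auto simp: bicharacter_def\<close>)

theorem mainTheorem6:
  fixes scR :: "'k::field \<Rightarrow> 'r::ring_1 \<Rightarrow> 'r"
    and scS :: "'k \<Rightarrow> 's::ring_1 \<Rightarrow> 's"
    and scT :: "'k \<Rightarrow> 't::ring_1 \<Rightarrow> 't"
    and GR :: "'a::ab_group_add \<Rightarrow> 'r set"
    and GS :: "'b::ab_group_add \<Rightarrow> 's set"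
    and formR :: "'r \<Rightarrow> 'r \<Rightarrow> 'k"
    and formS :: "'s \<Rightarrow> 's \<Rightarrow> 'k"
    and formT :: "'t \<Rightarrow> 't \<Rightarrow> 'k"
    and t :: "'a \<Rightarrow> 'b \<Rightarrow> 'k"
    and tp :: "'r \<Rightarrow> 's \<Rightarrow> 't"
    and sigmaR :: 'a and sigmaS :: 'b
    and a :: 'r and b :: 's and \<alpha> :: 'a and \<beta> :: 'b
  assumes R_frob: "frobenius_algebra scR formR" and R_graded: "graded scR GR"
    and S_frob: "frobenius_algebra scS formS" and S_graded: "graded scS GS"
    and t_bichar: "bicharacter t"
    and sigmaR: "\<forall>d d' r r'. r \<in> GR d \<longrightarrow> r' \<in> GR d' \<longrightarrow> formR r r' \<noteq> 0 \<longrightarrow> d + d' + sigmaR = 0"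
    and sigmaS: "\<forall>d d' s s'. s \<in> GS d \<longrightarrow> s' \<in> GS d' \<longrightarrow> formS s s' \<noteq> 0 \<longrightarrow> d + d' + sigmaS = 0"
    and T_tensor: "is_twisted_tensor scR GR scS GS t scT tp"
    and formT_bilin: "bilinear_map scT scT (*) formT"
    and formT_def: "\<forall>r s r' s' d e. r' \<in> GR d \<longrightarrow> s \<in> GS e \<longrightarrow>
                      formT (tp r s) (tp r' s') = t d e * formR r r' * formS s s'"
    and a_hom: "a \<in> GR \<alpha>" and b_hom: "b \<in> GS \<beta>"
  shows "nakayama formT (tp a b) =
           scT (t \<alpha> sigmaS * inverse (t sigmaR \<beta>)) (tp (nakayama formR a) (nakayama formS b))"
proof -
  have kT: "k_algebra scT" and tpT: "is_tensor_product scR scS scT tp"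
    and twist: "\<forall>a b r s r' s'. r' \<in> GR a \<longrightarrow> s \<in> GS b \<longrightarrow>
        tp r s * tp r' s' = scT (t a b) (tp (r * r') (s * s'))"
    using T_tensor unfolding is_twisted_tensor_def by auto
  have vsT: "vector_space scT" using tpT unfolding is_tensor_product_def by auto
  interpret T: vector_space scT by fact
  interpret R: vector_space scR by (rule frob_facts(1)[OF R_frob])
  interpret S: vector_space scS by (rule frob_facts(1)[OF S_frob])
  have tp1: "\<And>y. module_hom scR scT (\<lambda>x. tp x y)" and tp2: "\<And>x. module_hom scS scT (tp x)"
    using tpT unfolding is_tensor_product_def bilinear_map_def by (auto intro: lin_mh)
  obtain BR BS where BS_ind: "\<not> S.dependent BS"
    and BT: "T.span ((\<lambda>(r, s). tp r s) ` (BR \<times> BS)) = UNIV"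
    using tpT unfolding is_tensor_product_def by blast
  have fT1: "\<And>y. module_hom scT (*) (\<lambda>x. formT x y)" and fT2: "\<And>x. module_hom scT (*) (formT x)"
    using formT_bilin unfolding bilinear_map_def by (auto intro: lin_mh)
  note fR2 = frob_facts(2)[OF R_frob] and fR1 = frob_facts(3)[OF R_frob] and ndR = frob_facts(4)[OF R_frob]
  note fS2 = frob_facts(2)[OF S_frob] and fS1 = frob_facts(3)[OF S_frob] and ndS = frob_facts(4)[OF S_frob]
  note tb = bichar_facts[OF t_bichar]
  have L1: "formT (tp r s) (tp x y) = t (- d0 - sigmaR) e * formR r x * formS s y"
    if r: "r \<in> GR d0" and s: "s \<in> GS e" for r s d0 e x y
  proof -
    obtain g D where g: "finite D" "\<forall>d. g d \<in> GR d" "x = sum g D" using graded_dec[OF R_graded] by blast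
    have "formT (tp r s) (tp x y) = (\<Sum>d\<in>D. formT (tp r s) (tp (g d) y))"
      using g by (simp add: module_hom.sum[OF tp1] module_hom.sum[OF fT2])
    also have "\<dots> = (\<Sum>d\<in>D. t (- d0 - sigmaR) e * formR r (g d) * formS s y)"
    proof (rule sum.cong[OF refl])
      fix d assume "d \<in> D"
      have "formT (tp r s) (tp (g d) y) = t d e * formR r (g d) * formS s y"
        using formT_def g s by blast
      also have "\<dots> = t (- d0 - sigmaR) e * formR r (g d) * formS s y"
      proof (cases "formR r (g d) = 0")
        case False
        then have "d0 + d + sigmaR = 0" using sigmaR r g by blast
        then have "d = - d0 - sigmaR" by (metis add.commute add_diff_cancel_left' diff_minus_eq_add minus_add_cancel minus_diff_eq diff_add_cancel add_eq_0_iff2 eq_neg_iff_add_eq_0 diff_conv_add_uminus add.assoc)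
        then show ?thesis by simp
      qed simp
      finally show "formT (tp r s) (tp (g d) y) = t (- d0 - sigmaR) e * formR r (g d) * formS s y" .
    qed
    also have "\<dots> = t (- d0 - sigmaR) e * (\<Sum>d\<in>D. formR r (g d)) * formS s y"
      by (simp add: sum_distrib_left sum_distrib_right)
    also have "\<dots> = t (- d0 - sigmaR) e * formR r x * formS s y"
      using g by (simp add: module_hom.sum[OF fR2])
    finally show ?thesis .
  qed
  define H where "H = {tp r s | r s. (\<exists>d. r \<in> GR d) \<and> (\<exists>e. s \<in> GS e)}"
  have spanH: "y \<in> T.span H" for y
  proof -
    have "tp p q \<in> T.span H" for p q
    proof -
      obtain g D where g: "finite D" "\<forall>d. g d \<in> GR d" "p = sum g D" using graded_dec[OF R_graded] by blast
      obtain h E where h: "finite E" "\<forall>d. h d \<in> GS d" "q = sum h E" using graded_dec[OF S_graded] by blast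
      have "tp p q = (\<Sum>e\<in>E. \<Sum>d\<in>D. tp (g d) (h e))"
        using g h by (simp add: module_hom.sum[OF tp1] module_hom.sum[OF tp2])
      also have "\<dots> \<in> T.span H"
        by (intro T.span_sum T.span_base) (use g h in \<open>fastforce simp: H_def\<close>)
      finally show ?thesis .
    qed
    then have "(\<lambda>(r, s). tp r s) ` (BR \<times> BS) \<subseteq> T.span H" by auto
    then have "T.span ((\<lambda>(r, s). tp r s) ` (BR \<times> BS)) \<subseteq> T.span H"
      by (metis T.span_mono T.span_span)
    then show ?thesis using BT by auto
  qed
  define c where "c = t \<alpha> sigmaS * inverse (t sigmaR \<beta>)"
  define z0 where "z0 = scT c (tp (nakayama formR a) (nakayama formS b))"
  have ex: "formT (tp a b) y = formT y z0" for y
    using spanH[of y]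
  proof (induct rule: T.span_induct_alt)
    case base
    then show ?case by (simp add: module_hom.zero[OF fT1] module_hom.zero[OF fT2])
  next
    case (step k x y)
    from step(1) obtain r s d e where x: "x = tp r s" and r: "r \<in> GR d" and s: "s \<in> GS e"
      unfolding H_def by blast
    have "formT (tp a b) x = formT x z0"
    proof -
      have lhs: "formT (tp a b) x = t (- \<alpha> - sigmaR) \<beta> * formR a r * formS b s"
        unfolding x by (rule L1[OF a_hom b_hom])
      have "formT x z0 = c * (t (- d - sigmaR) e * formR r (nakayama formR a) * formS s (nakayama formS b))"
        unfolding z0_def x by (simp add: module_hom.scale[OF fT2] L1[OF r s])
      also have "\<dots> = c * (t (- d - sigmaR) e * formR a r * formS b s)"
        using nak_prop[OF R_frob, of a r] nak_prop[OF S_frob, of b s] by simp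
      finally have rhs: "formT x z0 = c * (t (- d - sigmaR) e * formR a r * formS b s)" .
      show ?thesis
      proof (cases "formR a r = 0 \<or> formS b s = 0")
        case True then show ?thesis using lhs rhs by auto
      next
        case False
        then have "\<alpha> + d + sigmaR = 0" "\<beta> + e + sigmaS = 0" using sigmaR sigmaS a_hom b_hom r s by blast+
        then have d: "- d - sigmaR = \<alpha>" and e: "e = - \<beta> - sigmaS"
          by (metis add.commute add_diff_cancel_left' diff_minus_eq_add minus_add_cancel minus_diff_eq diff_add_cancel add_eq_0_iff2 eq_neg_iff_add_eq_0 diff_conv_add_uminus add.assoc)+
        have l: "t (- \<alpha> - sigmaR) \<beta> = inverse (t \<alpha> \<beta>) * inverse (t sigmaR \<beta>)"
          unfolding diff_conv_add_uminus tb(3) tb(1) ..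
        have r: "t (- d - sigmaR) e = inverse (t \<alpha> \<beta>) * inverse (t \<alpha> sigmaS)"
        proof -
          have "t (- d - sigmaR) e = t \<alpha> (- \<beta> - sigmaS)" by (simp only: d e)
          also have "\<dots> = t \<alpha> (- \<beta> + - sigmaS)" by (simp only: diff_conv_add_uminus)
          also have "\<dots> = inverse (t \<alpha> \<beta>) * inverse (t \<alpha> sigmaS)" by (simp only: tb(4) tb(2))
          finally show ?thesis .
        qed
        have "t (- \<alpha> - sigmaR) \<beta> = c * t (- d - sigmaR) e"
          unfolding l r c_def
          using tb(5)[of \<alpha> \<beta>] tb(5)[of \<alpha> sigmaS] tb(5)[of sigmaR \<beta>] by (simp add: field_simps)
        then show ?thesis using lhs rhs by simp
      qed
    qed
    then show ?case using step(2)
      by (simp add: module_hom.scale[OF fT1] module_hom.add[OF fT1] module_hom.scale[OF fT2] module_hom.add[OF fT2])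
  qed
  have rep: "\<exists>Q x. finite Q \<and> Q \<subseteq> BS \<and> (\<forall>q. q \<notin> Q \<longrightarrow> x q = 0) \<and> w = (\<Sum>q\<in>Q. tp (x q) q)" for w
  proof -
    have "w \<in> T.span ((\<lambda>(r, s). tp r s) ` (BR \<times> BS))" using BT by auto
    then show ?thesis
    proof (induct rule: T.span_induct_alt)
      case base
      show ?case by (rule exI[of _ "{}"], rule exI[of _ "\<lambda>_. 0"]) simp
    next
      case (step k v u)
      from step(1) obtain p q where v: "v = tp p q" and q: "q \<in> BS" by auto
      from step(2) obtain Q x where Q: "finite Q" "Q \<subseteq> BS" "\<forall>q. q \<notin> Q \<longrightarrow> x q = 0"
        and u: "u = (\<Sum>q\<in>Q. tp (x q) q)" by blast
      define x' where "x' = (\<lambda>q'. x q' + (if q' = q then scR k p else 0))"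
      have s1: "(\<Sum>q'\<in>insert q Q. tp (x q') q') = u"
      proof (cases "q \<in> Q")
        case True then show ?thesis using u by (simp add: insert_absorb)
      next
        case False then show ?thesis using u Q by (simp add: module_hom.zero[OF tp1])
      qed
      have "(\<Sum>q'\<in>insert q Q. tp (x' q') q') =
            (\<Sum>q'\<in>insert q Q. tp (x q') q' + (if q' = q then tp (scR k p) q else 0))"
        unfolding x'_def by (intro sum.cong refl) (simp add: module_hom.add[OF tp1] module_hom.zero[OF tp1])
      also have "\<dots> = u + tp (scR k p) q"
        using Q(1) by (simp add: sum.distrib s1)
      also have "\<dots> = scT k v + u" unfolding v by (simp add: module_hom.scale[OF tp1] add.commute)
      finally have "scT k v + u = (\<Sum>q'\<in>insert q Q. tp (x' q') q')" by simp
      moreover have "\<forall>q'. q' \<notin> insert q Q \<longrightarrow> x' q' = 0" using Q(3) unfolding x'_def by simp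
      ultimately show ?case
        using Q q by (intro exI[of _ "insert q Q"] exI[of _ x'] conjI) simp_all
    qed
  qed
  have nd: "w = 0" if w0: "\<forall>y. formT y w = 0" for w
  proof -
    obtain Q x where Q: "finite Q" "Q \<subseteq> BS" and w: "w = (\<Sum>q\<in>Q. tp (x q) q)"
      using rep[of w] by blast
    have indep: "\<not> S.dependent Q" using BS_ind Q(2) S.dependent_mono by blast
    have xq0: "x q = 0" if qQ: "q \<in> Q" for q
    proof -
      have "formR r (x q) = 0" for r
      proof (rule graded_vanish[OF R_graded fR1])
        fix d r assume r: "r \<in> GR d"
        define v where "v = (\<Sum>q\<in>Q. scS (formR r (x q)) q)"
        have "formS s v = 0" for s
        proof (rule graded_vanish[OF S_graded fS1])
          fix e s assume s: "s \<in> GS e"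
          have "0 = formT (tp r s) w" using w0 by simp
          also have "\<dots> = (\<Sum>q\<in>Q. formT (tp r s) (tp (x q) q))"
            unfolding w by (rule module_hom.sum[OF fT2])
          also have "\<dots> = (\<Sum>q\<in>Q. t (- d - sigmaR) e * formR r (x q) * formS s q)"
            using L1[OF r s] by simp
          also have "\<dots> = t (- d - sigmaR) e * formS s v"
            unfolding v_def by (simp add: module_hom.sum[OF fS2] module_hom.scale[OF fS2] sum_distrib_left mult.assoc)
          finally show "formS s v = 0" using tb(5) by simp
        qed
        then have "v = 0" by (rule ndS)
        then have "S.dependent Q" if "\<exists>q\<in>Q. formR r (x q) \<noteq> 0"
          unfolding S.dependent_finite[OF Q(1)] using that v_def
          by (intro exI[of _ "\<lambda>q. formR r (x q)"] conjI) simp_all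
        then have "\<forall>q\<in>Q. formR r (x q) = 0" using indep by blast
        then show "formR r (x q) = 0" using qQ by blast
      qed
      then show "x q = 0" by (rule ndR)
    qed
    then show "w = 0" unfolding w by (simp add: module_hom.zero[OF tp1])
  qed
  have "nakayama formT (tp a b) = z0"
    unfolding nakayama_def
  proof (rule the_equality)
    show "\<forall>y. formT (tp a b) y = formT y z0" using ex by blast
    fix z assume "\<forall>y. formT (tp a b) y = formT y z"
    then have "\<forall>y. formT y (z - z0) = 0"
      by (metis ex module_hom.diff[OF fT2] diff_self)
    then have "z - z0 = 0" by (rule nd)
    then show "z = z0" by simp
  qed
  then show ?thesis unfolding z0_def c_def .
qed
end
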